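(* Let $G=(V,E)$ be an undirected graph with positive edge weights, and let $p,v\in V$ be distinct. If a minimum $p,v$-cut $S$ with $v\in S$ (and $p\notin S$) satisfies $|E(\{v\},V\setminus S)|>0.6\deg(v)$, then for all $v'\in S\setminus\{v\}$ we have $\lambda_{p,v'}\le 0.8\,\lambda_{p,v}$.
   Context: $|E(A,B)|$ is the total weight of edges between node sets $A$ and $B$; $\deg(u)$ is the total weight of edges incident to $u$; $\lambda_{x,y}$ denotes the value (total weight of crossing edges) of a minimum $x,y$-cut in $G$. *)

theory Defs
  imports Complex_Main
begin

text \<open>A finite undirected graph with positive edge weights on vertex set V is
represented by a symmetric weight function w: the edge {u,x} exists iff w u x > 0,
and its weight is w u x.\<close>

definition weighted_graph :: "'a set \<Rightarrow> ('a \<Rightarrow> 'a \<Rightarrow> real) \<Rightarrow> bool" where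
  "weighted_graph V w \<longleftrightarrow> finite V
     \<and> (\<forall>u x. w u x = w x u)
     \<and> (\<forall>u x. w u x \<ge> 0)
     \<and> (\<forall>u. w u u = 0)
     \<and> (\<forall>u x. w u x \<noteq> 0 \<longrightarrow> u \<in> V \<and> x \<in> V)"

definition edge_weight :: "('a \<Rightarrow> 'a \<Rightarrow> real) \<Rightarrow> 'a set \<Rightarrow> 'a set \<Rightarrow> real" where
  "edge_weight w A B = (\<Sum>a\<in>A. \<Sum>b\<in>B. w a b)"

definition deg :: "'a set \<Rightarrow> ('a \<Rightarrow> 'a \<Rightarrow> real) \<Rightarrow> 'a \<Rightarrow> real" where
  "deg V w u = (\<Sum>x\<in>V. w u x)"

definition cut_value :: "'a set \<Rightarrow> ('a \<Rightarrow> 'a \<Rightarrow> real) \<Rightarrow> 'a set \<Rightarrow> real" where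
  "cut_value V w S = edge_weight w S (V - S)"

definition xy_cuts :: "'a set \<Rightarrow> 'a \<Rightarrow> 'a \<Rightarrow> 'a set set" where
  "xy_cuts V x y = {S. S \<subseteq> V \<and> y \<in> S \<and> x \<notin> S}"

definition min_cut_value :: "'a set \<Rightarrow> ('a \<Rightarrow> 'a \<Rightarrow> real) \<Rightarrow> 'a \<Rightarrow> 'a \<Rightarrow> real" where
  "min_cut_value V w x y = Min (cut_value V w ` xy_cuts V x y)"

definition is_min_cut :: "'a set \<Rightarrow> ('a \<Rightarrow> 'a \<Rightarrow> real) \<Rightarrow> 'a \<Rightarrow> 'a \<Rightarrow> 'a set \<Rightarrow> bool" where
  "is_min_cut V w x y S \<longleftrightarrow> S \<in> xy_cuts V x y \<and> cut_value V w S = min_cut_value V w x y"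

end

theory Submission
  imports Defs
begin

lemma mcv_le:
  assumes "finite V" "T \<in> xy_cuts V x y"
  shows "min_cut_value V w x y \<le> cut_value V w T"
proof -
  have "finite (xy_cuts V x y)"
    by (rule finite_subset[of _ "Pow V"]) (auto simp: xy_cuts_def assms(1))
  then show ?thesis unfolding min_cut_value_def using assms(2) by (intro Min_le) auto
qed

theorem lemma4p4:
  fixes V :: "'a set" and w :: "'a \<Rightarrow> 'a \<Rightarrow> real" and p v :: 'a and S :: "'a set"
  assumes "weighted_graph V w"
    and "p \<in> V" and "v \<in> V" and "p \<noteq> v"
    and "is_min_cut V w p v S"
    and "edge_weight w {v} (V - S) > 0.6 * deg V w v"
  shows "\<forall>v' \<in> S - {v}. min_cut_value V w p v' \<le> 0.8 * min_cut_value V w p v"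
proof
  fix v' assume v': "v' \<in> S - {v}"
  have fin: "finite V" and sym: "\<And>u x. w u x = w x u" and self: "\<And>u. w u u = 0"
    using assms(1) unfolding weighted_graph_def by auto
  have SV: "S \<subseteq> V" "v \<in> S" "p \<notin> S" using assms(5) unfolding is_min_cut_def xy_cuts_def by auto
  have finS: "finite S" using SV fin finite_subset by blast
  define lam where "lam = min_cut_value V w p v"
  have lamS: "cut_value V w S = lam" using assms(5) unfolding is_min_cut_def lam_def by auto
  define a where "a = (\<Sum>b\<in>V-S. w v b)"
  define bb where "bb = (\<Sum>x\<in>S-{v}. w v x)"
  have ha: "edge_weight w {v} (V - S) = a" unfolding edge_weight_def a_def by simp
  have "deg V w v = (\<Sum>x\<in>V-S. w v x) + (\<Sum>x\<in>S. w v x)"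
    unfolding deg_def using SV fin
    by (metis Diff_partition add.commute finite_Diff sum.subset_diff)
  also have "(\<Sum>x\<in>S. w v x) = w v v + bb"
    unfolding bb_def using finS SV by (simp add: sum.remove)
  finally have hd: "deg V w v = a + bb" using self a_def by simp
  have c1: "cut_value V w S = (\<Sum>x\<in>S-{v}. \<Sum>b\<in>V-S. w x b) + a"
    unfolding cut_value_def edge_weight_def a_def using finS SV
    by (simp add: sum.remove add.commute)
  have VS': "V - (S - {v}) = insert v (V - S)" using SV by auto
  have c2: "cut_value V w (S - {v}) = (\<Sum>x\<in>S-{v}. \<Sum>b\<in>V-S. w x b) + bb"
  proof -
    have "\<And>x. sum (w x) (insert v (V - S)) = w x v + sum (w x) (V - S)"
      using fin SV by (simp add: sum.insert)
    then show ?thesis unfolding cut_value_def edge_weight_def VS' bb_def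
      by (simp add: sum.distrib sym add.commute)
  qed
  have "S - {v} \<in> xy_cuts V p v'" using SV v' unfolding xy_cuts_def by auto
  hence m1: "min_cut_value V w p v' \<le> cut_value V w (S - {v})" by (rule mcv_le[OF fin])
  have "{v} \<in> xy_cuts V p v" using assms(3,4) unfolding xy_cuts_def by auto
  hence "lam \<le> cut_value V w {v}" unfolding lam_def by (rule mcv_le[OF fin])
  also have "cut_value V w {v} = deg V w v"
    unfolding cut_value_def edge_weight_def deg_def using fin assms(3) self
    by (simp add: sum.remove)
  finally have "lam \<le> a + bb" using hd by simp
  then show "min_cut_value V w p v' \<le> 0.8 * lam"
    using m1 c1 c2 lamS hd ha assms(6) by simp
qed

end
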